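(* Let $P:\mathcal{C}^{\mathrm{op}}\to\mathbf{Pos}$ be a slat-doctrine whose fibres have finite joins. Then its universal completion $P^{un}$ satisfies the counterexample property: for all objects $A,B$ of $\mathcal{C}$ and every $\alpha\in P(A\times B)$, if $(A,B,\alpha)\le(A,1,\bot_{A\times 1})$ in $P^{un}(A)$ (i.e. "$a{:}A\mid\forall b{:}B\,\alpha(a,b)\vdash\bot$"), then there exists an arrow $g:A\to B$ of $\mathcal{C}$ such that $P_{\langle 1_A,g\rangle}(\alpha)\le\bot_A$ in $P(A)$ (i.e. "$a{:}A\mid\alpha(a,g(a))\vdash\bot$").
   Context: A slat-doctrine is a functor $P:\mathcal{C}^{\mathrm{op}}\to\mathbf{Pos}$ with $\mathcal{C}$ having finite products; $P_f:P(Y)\to P(X)$ is reindexing along $f:X\to Y$; $\bot_X$ denotes the least element of $P(X)$. Universal completion: $P^{un}(A)$ is the poset (reflection of the preorder) of triples $(A,B,\alpha)$ with $\alpha\in P(A\times B)$, where $(A,B,\alpha)\le(A,C,\beta)$ iff there is an arrow $g:A\times C\to B$ with $P_{\langle\mathrm{pr}_A,g\rangle}(\alpha)\le\beta$; the triple $(A,B,\alpha)$ represents the formula $\forall b{:}B\,\alpha(a,b)$ (it is the universal quantification along $\mathrm{pr}_A:A\times B\to A$ of the image of $\alpha$ in $P^{un}(A\times B)$), and $(A,1,\bot_{A\times 1})$ represents $\bot$ in $P^{un}(A)$. *)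

theory Defs
  imports Main
begin

text \<open>A category with (chosen) finite products, presented by objects, arrows
  with domain/codomain, composition (cmp g f = g after f), identities, a terminal
  object with unique arrows into it, and binary products with projections and
  pairing satisfying the universal property.\<close>

record ('o, 'a) fp_cat =
  Ob   :: "'o set"
  Ar   :: "'a set"
  dom  :: "'a \<Rightarrow> 'o"
  cod  :: "'a \<Rightarrow> 'o"
  cmp  :: "'a \<Rightarrow> 'a \<Rightarrow> 'a"
  idt  :: "'o \<Rightarrow> 'a"
  one  :: "'o"
  bang :: "'o \<Rightarrow> 'a"
  prd  :: "'o \<Rightarrow> 'o \<Rightarrow> 'o"
  pr1  :: "'o \<Rightarrow> 'o \<Rightarrow> 'a"
  pr2  :: "'o \<Rightarrow> 'o \<Rightarrow> 'a"
  pair :: "'a \<Rightarrow> 'a \<Rightarrow> 'a"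

definition Hom :: "('o, 'a, 'c) fp_cat_scheme \<Rightarrow> 'o \<Rightarrow> 'o \<Rightarrow> 'a set" where
  "Hom C X Y = {f \<in> Ar C. dom C f = X \<and> cod C f = Y}"

definition is_fp_cat :: "('o, 'a, 'c) fp_cat_scheme \<Rightarrow> bool" where
  "is_fp_cat C \<longleftrightarrow>
     (\<forall>f \<in> Ar C. dom C f \<in> Ob C \<and> cod C f \<in> Ob C)
   \<and> (\<forall>X \<in> Ob C. idt C X \<in> Hom C X X)
   \<and> (\<forall>X \<in> Ob C. \<forall>Y \<in> Ob C. \<forall>Z \<in> Ob C. \<forall>f \<in> Hom C X Y. \<forall>g \<in> Hom C Y Z.
        cmp C g f \<in> Hom C X Z)
   \<and> (\<forall>W \<in> Ob C. \<forall>X \<in> Ob C. \<forall>Y \<in> Ob C. \<forall>Z \<in> Ob C.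
        \<forall>f \<in> Hom C W X. \<forall>g \<in> Hom C X Y. \<forall>h \<in> Hom C Y Z.
        cmp C h (cmp C g f) = cmp C (cmp C h g) f)
   \<and> (\<forall>X \<in> Ob C. \<forall>Y \<in> Ob C. \<forall>f \<in> Hom C X Y.
        cmp C (idt C Y) f = f \<and> cmp C f (idt C X) = f)
   \<and> one C \<in> Ob C
   \<and> (\<forall>X \<in> Ob C. bang C X \<in> Hom C X (one C) \<and> (\<forall>f \<in> Hom C X (one C). f = bang C X))
   \<and> (\<forall>X \<in> Ob C. \<forall>Y \<in> Ob C.
        prd C X Y \<in> Ob C
      \<and> pr1 C X Y \<in> Hom C (prd C X Y) X
      \<and> pr2 C X Y \<in> Hom C (prd C X Y) Y
      \<and> (\<forall>Z \<in> Ob C. \<forall>f \<in> Hom C Z X. \<forall>g \<in> Hom C Z Y.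
           pair C f g \<in> Hom C Z (prd C X Y)
         \<and> cmp C (pr1 C X Y) (pair C f g) = f
         \<and> cmp C (pr2 C X Y) (pair C f g) = g
         \<and> (\<forall>h \<in> Hom C Z (prd C X Y).
              cmp C (pr1 C X Y) h = f \<and> cmp C (pr2 C X Y) h = g \<longrightarrow> h = pair C f g)))"

text \<open>A doctrine: a functor P : C^op \<rightarrow> Pos. fib X is the carrier of P(X),
  leq X its partial order, reidx f is P_f.\<close>

record ('o, 'a, 'p) doctrine =
  fib   :: "'o \<Rightarrow> 'p set"
  leq   :: "'o \<Rightarrow> 'p \<Rightarrow> 'p \<Rightarrow> bool"
  reidx :: "'a \<Rightarrow> 'p \<Rightarrow> 'p"

definition is_slat_doctrine ::
  "('o, 'a, 'c) fp_cat_scheme \<Rightarrow> ('o, 'a, 'p, 'd) doctrine_scheme \<Rightarrow> bool" where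
  "is_slat_doctrine C P \<longleftrightarrow>
     is_fp_cat C
   \<and> (\<forall>X \<in> Ob C.
        (\<forall>x \<in> fib P X. leq P X x x)
      \<and> (\<forall>x \<in> fib P X. \<forall>y \<in> fib P X. \<forall>z \<in> fib P X.
           leq P X x y \<and> leq P X y z \<longrightarrow> leq P X x z)
      \<and> (\<forall>x \<in> fib P X. \<forall>y \<in> fib P X. leq P X x y \<and> leq P X y x \<longrightarrow> x = y))
   \<and> (\<forall>X \<in> Ob C. \<forall>Y \<in> Ob C. \<forall>f \<in> Hom C X Y.
        (\<forall>y \<in> fib P Y. reidx P f y \<in> fib P X)
      \<and> (\<forall>y \<in> fib P Y. \<forall>y' \<in> fib P Y. leq P Y y y' \<longrightarrow> leq P X (reidx P f y) (reidx P f y')))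
   \<and> (\<forall>X \<in> Ob C. \<forall>x \<in> fib P X. reidx P (idt C X) x = x)
   \<and> (\<forall>X \<in> Ob C. \<forall>Y \<in> Ob C. \<forall>Z \<in> Ob C. \<forall>f \<in> Hom C X Y. \<forall>g \<in> Hom C Y Z.
        \<forall>z \<in> fib P Z. reidx P (cmp C g f) z = reidx P f (reidx P g z))"

definition fibres_have_finite_joins ::
  "('o, 'a, 'c) fp_cat_scheme \<Rightarrow> ('o, 'a, 'p, 'd) doctrine_scheme \<Rightarrow> bool" where
  "fibres_have_finite_joins C P \<longleftrightarrow>
     (\<forall>X \<in> Ob C.
        (\<exists>b \<in> fib P X. \<forall>x \<in> fib P X. leq P X b x)
      \<and> (\<forall>x \<in> fib P X. \<forall>y \<in> fib P X. \<exists>j \<in> fib P X.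
           leq P X x j \<and> leq P X y j
         \<and> (\<forall>z \<in> fib P X. leq P X x z \<and> leq P X y z \<longrightarrow> leq P X j z)))"

definition fbot :: "('o, 'a, 'p, 'd) doctrine_scheme \<Rightarrow> 'o \<Rightarrow> 'p" where
  "fbot P X = (THE b. b \<in> fib P X \<and> (\<forall>x \<in> fib P X. leq P X b x))"

text \<open>The preorder on P^un(A): (A,B,alpha) \<le> (A,C,beta) iff there is
  g : A\<times>C \<rightarrow> B with P_<pr_A,g>(alpha) \<le> beta in P(A\<times>C).\<close>

definition un_le ::
  "('o, 'a, 'c) fp_cat_scheme \<Rightarrow> ('o, 'a, 'p, 'd) doctrine_scheme \<Rightarrow>
     'o \<Rightarrow> 'o \<Rightarrow> 'p \<Rightarrow> 'o \<Rightarrow> 'p \<Rightarrow> bool" where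
  "un_le C P A B \<alpha> D \<beta> \<longleftrightarrow>
     (\<exists>g \<in> Hom C (prd C A D) B.
        leq P (prd C A D) (reidx P (pair C (pr1 C A D) g) \<alpha>) \<beta>)"

end

theory Submission
  imports Defs
begin

lemma fp_id:
  assumes fp: "is_fp_cat C" shows "X \<in> Ob C \<Longrightarrow> idt C X \<in> Hom C X X"
proof -
  note c = fp[unfolded is_fp_cat_def, THEN conjunct2, THEN conjunct1]
  show "X \<in> Ob C \<Longrightarrow> idt C X \<in> Hom C X X" using c by blast
qed

lemma fp_cmp:
  assumes fp: "is_fp_cat C" shows "X \<in> Ob C \<Longrightarrow> Y \<in> Ob C \<Longrightarrow> Z \<in> Ob C \<Longrightarrow> f \<in> Hom C X Y \<Longrightarrow> g \<in> Hom C Y Z \<Longrightarrow> cmp C g f \<in> Hom C X Z"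
proof -
  note c = fp[unfolded is_fp_cat_def, THEN conjunct2, THEN conjunct2, THEN conjunct1]
  show "X \<in> Ob C \<Longrightarrow> Y \<in> Ob C \<Longrightarrow> Z \<in> Ob C \<Longrightarrow> f \<in> Hom C X Y \<Longrightarrow> g \<in> Hom C Y Z \<Longrightarrow> cmp C g f \<in> Hom C X Z" using c by blast
qed

lemma fp_assoc:
  assumes fp: "is_fp_cat C" shows "W \<in> Ob C \<Longrightarrow> X \<in> Ob C \<Longrightarrow> Y \<in> Ob C \<Longrightarrow> Z \<in> Ob C \<Longrightarrow> f \<in> Hom C W X \<Longrightarrow> g \<in> Hom C X Y \<Longrightarrow> h \<in> Hom C Y Z \<Longrightarrow> cmp C h (cmp C g f) = cmp C (cmp C h g) f"
proof -
  note c = fp[unfolded is_fp_cat_def, THEN conjunct2, THEN conjunct2, THEN conjunct2, THEN conjunct1]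
  show "W \<in> Ob C \<Longrightarrow> X \<in> Ob C \<Longrightarrow> Y \<in> Ob C \<Longrightarrow> Z \<in> Ob C \<Longrightarrow> f \<in> Hom C W X \<Longrightarrow> g \<in> Hom C X Y \<Longrightarrow> h \<in> Hom C Y Z \<Longrightarrow> cmp C h (cmp C g f) = cmp C (cmp C h g) f" using c by blast
qed

lemma fp_bang:
  assumes fp: "is_fp_cat C" shows "X \<in> Ob C \<Longrightarrow> bang C X \<in> Hom C X (one C)"
proof -
  note c = fp[unfolded is_fp_cat_def, THEN conjunct2, THEN conjunct2, THEN conjunct2, THEN conjunct2, THEN conjunct2, THEN conjunct2, THEN conjunct1]
  show "X \<in> Ob C \<Longrightarrow> bang C X \<in> Hom C X (one C)" using c by blast
qed

lemma fp_prd: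
  assumes fp: "is_fp_cat C" shows "X \<in> Ob C \<Longrightarrow> Y \<in> Ob C \<Longrightarrow> prd C X Y \<in> Ob C"
proof -
  note c = fp[unfolded is_fp_cat_def, THEN conjunct2, THEN conjunct2, THEN conjunct2, THEN conjunct2, THEN conjunct2, THEN conjunct2, THEN conjunct2]
  show "X \<in> Ob C \<Longrightarrow> Y \<in> Ob C \<Longrightarrow> prd C X Y \<in> Ob C" using c by blast
qed

lemma fp_pr1:
  assumes fp: "is_fp_cat C" shows "X \<in> Ob C \<Longrightarrow> Y \<in> Ob C \<Longrightarrow> pr1 C X Y \<in> Hom C (prd C X Y) X"
proof -
  note c = fp[unfolded is_fp_cat_def, THEN conjunct2, THEN conjunct2, THEN conjunct2, THEN conjunct2, THEN conjunct2, THEN conjunct2, THEN conjunct2]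
  show "X \<in> Ob C \<Longrightarrow> Y \<in> Ob C \<Longrightarrow> pr1 C X Y \<in> Hom C (prd C X Y) X" using c by blast
qed

lemma fp_pr2:
  assumes fp: "is_fp_cat C" shows "X \<in> Ob C \<Longrightarrow> Y \<in> Ob C \<Longrightarrow> pr2 C X Y \<in> Hom C (prd C X Y) Y"
proof -
  note c = fp[unfolded is_fp_cat_def, THEN conjunct2, THEN conjunct2, THEN conjunct2, THEN conjunct2, THEN conjunct2, THEN conjunct2, THEN conjunct2]
  show "X \<in> Ob C \<Longrightarrow> Y \<in> Ob C \<Longrightarrow> pr2 C X Y \<in> Hom C (prd C X Y) Y" using c by blast
qed

lemma fp_pair:
  assumes fp: "is_fp_cat C" shows "X \<in> Ob C \<Longrightarrow> Y \<in> Ob C \<Longrightarrow> Z \<in> Ob C \<Longrightarrow> f \<in> Hom C Z X \<Longrightarrow> g \<in> Hom C Z Y \<Longrightarrow> pair C f g \<in> Hom C Z (prd C X Y)"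
proof -
  note c = fp[unfolded is_fp_cat_def, THEN conjunct2, THEN conjunct2, THEN conjunct2, THEN conjunct2, THEN conjunct2, THEN conjunct2, THEN conjunct2]
  show "X \<in> Ob C \<Longrightarrow> Y \<in> Ob C \<Longrightarrow> Z \<in> Ob C \<Longrightarrow> f \<in> Hom C Z X \<Longrightarrow> g \<in> Hom C Z Y \<Longrightarrow> pair C f g \<in> Hom C Z (prd C X Y)" using c by blast
qed

lemma fp_p1:
  assumes fp: "is_fp_cat C" shows "X \<in> Ob C \<Longrightarrow> Y \<in> Ob C \<Longrightarrow> Z \<in> Ob C \<Longrightarrow> f \<in> Hom C Z X \<Longrightarrow> g \<in> Hom C Z Y \<Longrightarrow> cmp C (pr1 C X Y) (pair C f g) = f"
proof -
  note c = fp[unfolded is_fp_cat_def, THEN conjunct2, THEN conjunct2, THEN conjunct2, THEN conjunct2, THEN conjunct2, THEN conjunct2, THEN conjunct2]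
  show "X \<in> Ob C \<Longrightarrow> Y \<in> Ob C \<Longrightarrow> Z \<in> Ob C \<Longrightarrow> f \<in> Hom C Z X \<Longrightarrow> g \<in> Hom C Z Y \<Longrightarrow> cmp C (pr1 C X Y) (pair C f g) = f" using c by blast
qed

lemma fp_p2:
  assumes fp: "is_fp_cat C" shows "X \<in> Ob C \<Longrightarrow> Y \<in> Ob C \<Longrightarrow> Z \<in> Ob C \<Longrightarrow> f \<in> Hom C Z X \<Longrightarrow> g \<in> Hom C Z Y \<Longrightarrow> cmp C (pr2 C X Y) (pair C f g) = g"
proof -
  note c = fp[unfolded is_fp_cat_def, THEN conjunct2, THEN conjunct2, THEN conjunct2, THEN conjunct2, THEN conjunct2, THEN conjunct2, THEN conjunct2]
  show "X \<in> Ob C \<Longrightarrow> Y \<in> Ob C \<Longrightarrow> Z \<in> Ob C \<Longrightarrow> f \<in> Hom C Z X \<Longrightarrow> g \<in> Hom C Z Y \<Longrightarrow> cmp C (pr2 C X Y) (pair C f g) = g" using c by blast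
qed

lemma fp_uniq:
  assumes fp: "is_fp_cat C" shows "X \<in> Ob C \<Longrightarrow> Y \<in> Ob C \<Longrightarrow> Z \<in> Ob C \<Longrightarrow> f \<in> Hom C Z X \<Longrightarrow> g \<in> Hom C Z Y \<Longrightarrow> h \<in> Hom C Z (prd C X Y) \<Longrightarrow> cmp C (pr1 C X Y) h = f \<Longrightarrow> cmp C (pr2 C X Y) h = g \<Longrightarrow> h = pair C f g"
proof -
  note c = fp[unfolded is_fp_cat_def, THEN conjunct2, THEN conjunct2, THEN conjunct2, THEN conjunct2, THEN conjunct2, THEN conjunct2, THEN conjunct2]
  show "X \<in> Ob C \<Longrightarrow> Y \<in> Ob C \<Longrightarrow> Z \<in> Ob C \<Longrightarrow> f \<in> Hom C Z X \<Longrightarrow> g \<in> Hom C Z Y \<Longrightarrow> h \<in> Hom C Z (prd C X Y) \<Longrightarrow> cmp C (pr1 C X Y) h = f \<Longrightarrow> cmp C (pr2 C X Y) h = g \<Longrightarrow> h = pair C f g" using c by blast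
qed

lemma sl_anti:
  assumes sl: "is_slat_doctrine C P" shows "X \<in> Ob C \<Longrightarrow> x \<in> fib P X \<Longrightarrow> y \<in> fib P X \<Longrightarrow> leq P X x y \<Longrightarrow> leq P X y x \<Longrightarrow> x = y"
proof -
  note c = sl[unfolded is_slat_doctrine_def, THEN conjunct2, THEN conjunct1]
  show "X \<in> Ob C \<Longrightarrow> x \<in> fib P X \<Longrightarrow> y \<in> fib P X \<Longrightarrow> leq P X x y \<Longrightarrow> leq P X y x \<Longrightarrow> x = y" using c by blast
qed

lemma sl_rf:
  assumes sl: "is_slat_doctrine C P" shows "X \<in> Ob C \<Longrightarrow> Y \<in> Ob C \<Longrightarrow> f \<in> Hom C X Y \<Longrightarrow> y \<in> fib P Y \<Longrightarrow> reidx P f y \<in> fib P X"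
proof -
  note c = sl[unfolded is_slat_doctrine_def, THEN conjunct2, THEN conjunct2, THEN conjunct1]
  show "X \<in> Ob C \<Longrightarrow> Y \<in> Ob C \<Longrightarrow> f \<in> Hom C X Y \<Longrightarrow> y \<in> fib P Y \<Longrightarrow> reidx P f y \<in> fib P X" using c by blast
qed

lemma sl_mono:
  assumes sl: "is_slat_doctrine C P" shows "X \<in> Ob C \<Longrightarrow> Y \<in> Ob C \<Longrightarrow> f \<in> Hom C X Y \<Longrightarrow> y \<in> fib P Y \<Longrightarrow> y' \<in> fib P Y \<Longrightarrow> leq P Y y y' \<Longrightarrow> leq P X (reidx P f y) (reidx P f y')"
proof -
  note c = sl[unfolded is_slat_doctrine_def, THEN conjunct2, THEN conjunct2, THEN conjunct1]
  show "X \<in> Ob C \<Longrightarrow> Y \<in> Ob C \<Longrightarrow> f \<in> Hom C X Y \<Longrightarrow> y \<in> fib P Y \<Longrightarrow> y' \<in> fib P Y \<Longrightarrow> leq P Y y y' \<Longrightarrow> leq P X (reidx P f y) (reidx P f y')" using c by blast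
qed

lemma sl_id:
  assumes sl: "is_slat_doctrine C P" shows "X \<in> Ob C \<Longrightarrow> x \<in> fib P X \<Longrightarrow> reidx P (idt C X) x = x"
proof -
  note c = sl[unfolded is_slat_doctrine_def, THEN conjunct2, THEN conjunct2, THEN conjunct2, THEN conjunct1]
  show "X \<in> Ob C \<Longrightarrow> x \<in> fib P X \<Longrightarrow> reidx P (idt C X) x = x" using c by blast
qed

lemma sl_cmp:
  assumes sl: "is_slat_doctrine C P" shows "X \<in> Ob C \<Longrightarrow> Y \<in> Ob C \<Longrightarrow> Z \<in> Ob C \<Longrightarrow> f \<in> Hom C X Y \<Longrightarrow> g \<in> Hom C Y Z \<Longrightarrow> z \<in> fib P Z \<Longrightarrow> reidx P (cmp C g f) z = reidx P f (reidx P g z)"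
proof -
  note c = sl[unfolded is_slat_doctrine_def, THEN conjunct2, THEN conjunct2, THEN conjunct2, THEN conjunct2]
  show "X \<in> Ob C \<Longrightarrow> Y \<in> Ob C \<Longrightarrow> Z \<in> Ob C \<Longrightarrow> f \<in> Hom C X Y \<Longrightarrow> g \<in> Hom C Y Z \<Longrightarrow> z \<in> fib P Z \<Longrightarrow> reidx P (cmp C g f) z = reidx P f (reidx P g z)" using c by blast
qed

lemma fp_one: "is_fp_cat C \<Longrightarrow> one C \<in> Ob C" unfolding is_fp_cat_def by simp
lemma sl_fp: "is_slat_doctrine C P \<Longrightarrow> is_fp_cat C" unfolding is_slat_doctrine_def by simp

lemma fbot_eq:
  assumes "is_slat_doctrine C P" "X \<in> Ob C" "b \<in> fib P X" "\<forall>x \<in> fib P X. leq P X b x"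
  shows "fbot P X = b"
  unfolding fbot_def
proof (rule the_equality)
  show "b \<in> fib P X \<and> (\<forall>x\<in>fib P X. leq P X b x)" using assms by blast
next
  fix c assume c: "c \<in> fib P X \<and> (\<forall>x\<in>fib P X. leq P X c x)"
  have anti: "\<forall>x \<in> fib P X. \<forall>y \<in> fib P X. leq P X x y \<and> leq P X y x \<longrightarrow> x = y"
    using assms(1,2) unfolding is_slat_doctrine_def by blast
  show "c = b" using anti c assms(3,4) by blast
qed

theorem theorem11:
  fixes C :: "('o, 'a) fp_cat" and P :: "('o, 'a, 'p) doctrine"
  assumes "is_slat_doctrine C P"
    and "fibres_have_finite_joins C P"
    and "A \<in> Ob C" and "B \<in> Ob C"
    and "\<alpha> \<in> fib P (prd C A B)"
    and "un_le C P A B \<alpha> (one C) (fbot P (prd C A (one C)))"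
  shows "\<exists>g \<in> Hom C A B. leq P A (reidx P (pair C (idt C A) g) \<alpha>) (fbot P A)"
proof -
  note S = assms(1)
  have fp: "is_fp_cat C" using sl_fp[OF S] .
  let ?O = "one C"
  let ?A1 = "prd C A ?O"
  have O: "?O \<in> Ob C" using fp_one[OF fp] .
  have A1: "?A1 \<in> Ob C" using fp_prd[OF fp assms(3) O] .
  have AB: "prd C A B \<in> Ob C" using fp_prd[OF fp assms(3,4)] .
  have idA: "idt C A \<in> Hom C A A" using fp_id[OF fp assms(3)] .
  have bA: "bang C A \<in> Hom C A ?O" using fp_bang[OF fp assms(3)] .
  define h where "h = pair C (idt C A) (bang C A)"
  have p1: "pr1 C A ?O \<in> Hom C ?A1 A" using fp_pr1[OF fp assms(3) O] .
  have h1: "h \<in> Hom C A ?A1" unfolding h_def using fp_pair[OF fp assms(3) O assms(3) idA bA] .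
  have h2: "cmp C (pr1 C A ?O) h = idt C A" unfolding h_def using fp_p1[OF fp assms(3) O assms(3) idA bA] .
  obtain g where g: "g \<in> Hom C ?A1 B"
    and le: "leq P ?A1 (reidx P (pair C (pr1 C A ?O) g) \<alpha>) (fbot P ?A1)"
    using assms(6) unfolding un_le_def by blast
  define k where "k = pair C (pr1 C A ?O) g"
  have k1: "k \<in> Hom C ?A1 (prd C A B)" unfolding k_def using fp_pair[OF fp assms(3,4) A1 p1 g] .
  have k2: "cmp C (pr1 C A B) k = pr1 C A ?O" unfolding k_def using fp_p1[OF fp assms(3,4) A1 p1 g] .
  have k3: "cmp C (pr2 C A B) k = g" unfolding k_def using fp_p2[OF fp assms(3,4) A1 p1 g] .
  define g' where "g' = cmp C g h"
  have g': "g' \<in> Hom C A B" unfolding g'_def using fp_cmp[OF fp assms(3) A1 assms(4) h1 g] .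
  have pr1AB: "pr1 C A B \<in> Hom C (prd C A B) A" using fp_pr1[OF fp assms(3,4)] .
  have pr2AB: "pr2 C A B \<in> Hom C (prd C A B) B" using fp_pr2[OF fp assms(3,4)] .
  have kh: "cmp C k h \<in> Hom C A (prd C A B)" using fp_cmp[OF fp assms(3) A1 AB h1 k1] .
  have c1: "cmp C (pr1 C A B) (cmp C k h) = idt C A"
    using fp_assoc[OF fp assms(3) A1 AB assms(3) h1 k1 pr1AB] k2 h2 by simp
  have c2: "cmp C (pr2 C A B) (cmp C k h) = g'"
    using fp_assoc[OF fp assms(3) A1 AB assms(4) h1 k1 pr2AB] k3 unfolding g'_def by simp
  have eq: "cmp C k h = pair C (idt C A) g'"
    using fp_uniq[OF fp assms(3,4,3) idA g' kh c1 c2] .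
  obtain b where b: "b \<in> fib P ?A1" "\<forall>x \<in> fib P ?A1. leq P ?A1 b x"
    using assms(2) A1 unfolding fibres_have_finite_joins_def by blast
  have fb: "fbot P ?A1 = b" using fbot_eq[OF assms(1) A1 b] .
  have hb: "reidx P h b \<in> fib P A" using sl_rf[OF S assms(3) A1 h1 b(1)] .
  have botA: "fbot P A = reidx P h b"
  proof (rule fbot_eq[OF assms(1) assms(3) hb])
    show "\<forall>x\<in>fib P A. leq P A (reidx P h b) x"
    proof
      fix x assume x: "x \<in> fib P A"
      have px: "reidx P (pr1 C A ?O) x \<in> fib P ?A1" using sl_rf[OF S A1 assms(3) p1 x] .
      have "leq P A (reidx P h b) (reidx P h (reidx P (pr1 C A ?O) x))"
        using sl_mono[OF S assms(3) A1 h1 b(1) px] b(2) px by blast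
      moreover have "reidx P h (reidx P (pr1 C A ?O) x) = x"
        using sl_cmp[OF S assms(3) A1 assms(3) h1 p1 x] h2 sl_id[OF S assms(3) x] by simp
      ultimately show "leq P A (reidx P h b) x" by simp
    qed
  qed
  have ka: "reidx P k \<alpha> \<in> fib P ?A1" using sl_rf[OF S A1 AB k1 assms(5)] .
  have "leq P A (reidx P h (reidx P k \<alpha>)) (reidx P h b)"
    using sl_mono[OF S assms(3) A1 h1 ka b(1)] le fb unfolding k_def by blast
  moreover have "reidx P (cmp C k h) \<alpha> = reidx P h (reidx P k \<alpha>)"
    using sl_cmp[OF S assms(3) A1 AB h1 k1 assms(5)] .
  ultimately have "leq P A (reidx P (pair C (idt C A) g') \<alpha>) (fbot P A)"
    using eq botA by simp
  thus ?thesis using g' by blast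
qed

end
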